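(* Let $\mathcal{X}=\{X\in\mathbb{R}^{n\times m}: X\ge0 \text{ entrywise},\ X^\top\mathbb{1}_n=\mathbb{1}_m\}$ (column-stochastic matrices) and consider the lift $\varphi\colon(\mathrm{S}^{n-1})^m\to\mathcal{X}$, $\varphi(y_1,\dots,y_m)=[y_1\odot y_1,\dots,y_m\odot y_m]$. It satisfies "local $\Rightarrow$ local" at every point, satisfies "1 $\Rightarrow$ 1" at $(y_1,\dots,y_m)$ if and only if $(y_i)_j\neq0$ for all $i,j$, and satisfies "2 $\Rightarrow$ 1" at every point.
   Context: $\mathbb{1}_n$ is the all-ones vector, $\odot$ the entrywise product, $[x_1,\dots,x_m]$ the $n\times m$ matrix with columns $x_i$, $\mathrm{S}^{n-1}$ the unit sphere. General setting: for a smooth manifold $\mathcal{M}$ and smooth $\varphi\colon\mathcal{M}\to\mathcal{E}$ with image $\mathcal{X}$, and a cost $f$, set $g=f\circ\varphi$. Tangent cone: $\mathrm{T}_x\mathcal{X}=\{\lim (x_i-x)/\tau_i: x_i\in\mathcal{X},\tau_i>0,\tau_i\to0\}$; $K^*=\{u:\langle u,v\rangle\ge0\ \forall v\in K\}$; $x$ is stationary for $f$ on $\mathcal{X}$ if $\nabla f(x)\in(\mathrm{T}_x\mathcal{X})^*$. $y$ is 1-critical for $g$ if $(g\circ c)'(0)=0$ for all smooth curves $c$ in $\mathcal{M}$ with $c(0)=y$; 2-critical if moreover $(g\circ c)''(0)\ge0$ for all such curves. "local $\Rightarrow$ local" at $y$: for every continuous $f\colon\mathcal{X}\to\mathbb{R}$,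 if $y$ is a local minimum of $g$ then $\varphi(y)$ is a local minimum of $f$ on $\mathcal{X}$. "$k\Rightarrow1$" at $y$ ($k=1,2$): for every $k$-times differentiable $f\colon\mathcal{E}\to\mathbb{R}$, if $y$ is $k$-critical for $g$ then $\varphi(y)$ is stationary for $f$ on $\mathcal{X}$. *)

theory Defs
  imports "HOL-Analysis.Analysis"
begin

text \<open>C-infinity curves defined on all of the real line (every smooth germ at 0 is realised
  by such a curve after a reparametrisation that is the identity near 0).\<close>
definition smooth_curve :: "(real \<Rightarrow> 'a::real_normed_vector) \<Rightarrow> bool" where
  "smooth_curve c \<longleftrightarrow> (\<exists>D :: nat \<Rightarrow> real \<Rightarrow> 'a. D 0 = c \<and>
      (\<forall>k t. (D k has_vector_derivative D (Suc k) t) (at t)))"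

definition crit1 :: "'a::real_normed_vector set \<Rightarrow> ('a \<Rightarrow> real) \<Rightarrow> 'a \<Rightarrow> bool" where
  "crit1 M g y \<longleftrightarrow> (\<forall>c. smooth_curve c \<and> (\<forall>t. c t \<in> M) \<and> c 0 = y \<longrightarrow> deriv (g \<circ> c) 0 = 0)"

definition crit2 :: "'a::real_normed_vector set \<Rightarrow> ('a \<Rightarrow> real) \<Rightarrow> 'a \<Rightarrow> bool" where
  "crit2 M g y \<longleftrightarrow> crit1 M g y \<and>
     (\<forall>c. smooth_curve c \<and> (\<forall>t. c t \<in> M) \<and> c 0 = y \<longrightarrow> deriv (deriv (g \<circ> c)) 0 \<ge> 0)"

definition tangent_cone :: "'a::real_normed_vector set \<Rightarrow> 'a \<Rightarrow> 'a set" where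
  "tangent_cone X x = {v. \<exists>(xs :: nat \<Rightarrow> 'a) (\<tau> :: nat \<Rightarrow> real).
      (\<forall>i. xs i \<in> X) \<and> (\<forall>i. \<tau> i > 0) \<and> \<tau> \<longlonglongrightarrow> 0 \<and>
      (\<lambda>i. (xs i - x) /\<^sub>R \<tau> i) \<longlonglongrightarrow> v}"

definition dual_cone :: "'a::real_inner set \<Rightarrow> 'a set" where
  "dual_cone K = {u. \<forall>v\<in>K. inner u v \<ge> 0}"

definition stationary :: "('a::real_inner \<Rightarrow> real) \<Rightarrow> 'a set \<Rightarrow> 'a \<Rightarrow> bool" where
  "stationary f X x \<longleftrightarrow> (\<exists>G. (f has_derivative (\<lambda>v. inner G v)) (at x) \<and>
      G \<in> dual_cone (tangent_cone X x))"

definition once_differentiable :: "('a::real_normed_vector \<Rightarrow> real) \<Rightarrow> bool" where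
  "once_differentiable f \<longleftrightarrow> (\<forall>x. f differentiable at x)"

definition twice_differentiable :: "('a::real_normed_vector \<Rightarrow> real) \<Rightarrow> bool" where
  "twice_differentiable f \<longleftrightarrow> (\<exists>D :: 'a \<Rightarrow> ('a \<Rightarrow>\<^sub>L real).
      (\<forall>x. (f has_derivative blinfun_apply (D x)) (at x)) \<and> (\<forall>x. D differentiable at x))"

definition local_min_on :: "'a::metric_space set \<Rightarrow> ('a \<Rightarrow> real) \<Rightarrow> 'a \<Rightarrow> bool" where
  "local_min_on S h x \<longleftrightarrow> x \<in> S \<and> (\<exists>e>0. \<forall>z\<in>S. dist z x < e \<longrightarrow> h x \<le> h z)"

definition local_to_local ::
  "'a::metric_space set \<Rightarrow> ('a \<Rightarrow> 'b::metric_space) \<Rightarrow> 'b set \<Rightarrow> 'a \<Rightarrow> bool" where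
  "local_to_local M \<phi> X y \<longleftrightarrow> (\<forall>f :: 'b \<Rightarrow> real. continuous_on X f \<longrightarrow>
      local_min_on M (f \<circ> \<phi>) y \<longrightarrow> local_min_on X f (\<phi> y))"

definition one_to_one ::
  "'a::real_normed_vector set \<Rightarrow> ('a \<Rightarrow> 'b::real_inner) \<Rightarrow> 'b set \<Rightarrow> 'a \<Rightarrow> bool" where
  "one_to_one M \<phi> X y \<longleftrightarrow> (\<forall>f :: 'b \<Rightarrow> real. once_differentiable f \<longrightarrow>
      crit1 M (f \<circ> \<phi>) y \<longrightarrow> stationary f X (\<phi> y))"

definition two_to_one ::
  "'a::real_normed_vector set \<Rightarrow> ('a \<Rightarrow> 'b::real_inner) \<Rightarrow> 'b set \<Rightarrow> 'a \<Rightarrow> bool" where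
  "two_to_one M \<phi> X y \<longleftrightarrow> (\<forall>f :: 'b \<Rightarrow> real. twice_differentiable f \<longrightarrow>
      crit2 M (f \<circ> \<phi>) y \<longrightarrow> stationary f X (\<phi> y))"

text \<open>A point (y_1,...,y_m) is Y :: real^'n^'m with Y$i = y_i.  A matrix X in R^{n x m}
  is X :: real^'m^'n with entry X$j$i (row j, column i).\<close>

definition sphere_product :: "(real^'n^'m) set" where
  "sphere_product = {Y. \<forall>i. norm (Y $ i) = 1}"

definition col_stochastic :: "(real^'m^'n) set" where
  "col_stochastic = {X. (\<forall>j i. X $ j $ i \<ge> 0) \<and> (\<forall>i. (\<Sum>j\<in>UNIV. X $ j $ i) = 1)}"

definition sq_lift :: "real^'n^'m \<Rightarrow> real^'m^'n" where
  "sq_lift Y = (\<chi> j i. (Y $ i $ j) * (Y $ i $ j))"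

end

theory Submission
  imports Defs
begin

lemma riesz:
  fixes L :: "'a::euclidean_space \<Rightarrow> real"
  assumes "linear L"
  shows "\<exists>G. L = inner G"
proof
  show "L = inner (\<Sum>b\<in>Basis. L b *\<^sub>R b)"
  proof
    fix v
    have "L v = L (\<Sum>b\<in>Basis. inner v b *\<^sub>R b)" by (simp add: euclidean_representation)
    also have "\<dots> = (\<Sum>b\<in>Basis. inner v b * L b)"
      using assms by (simp add: linear_sum linear_scale)
    also have "\<dots> = inner (\<Sum>b\<in>Basis. L b *\<^sub>R b) v"
      by (simp add: inner_sum_right inner_commute mult.commute)
    finally show "L v = inner (\<Sum>b\<in>Basis. L b *\<^sub>R b) v" .
  qed
qed

lemma norm1_iff: "norm (v::real^'n) = 1 \<longleftrightarrow> (\<Sum>j\<in>UNIV. v$j * v$j) = 1"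
proof -
  have "norm v = sqrt (\<Sum>j\<in>UNIV. v$j * v$j)"
    by (simp add: norm_vec_def L2_set_def power2_eq_square)
  then show ?thesis by simp
qed

lemma sum_two:
  fixes a b :: "'n::finite \<Rightarrow> 'b::comm_monoid_add"
  assumes "j \<noteq> k"
  shows "(\<Sum>l\<in>UNIV. (if l = j then a l else if l = k then b l else 0)) = a j + b k"
proof -
  have "(\<Sum>l\<in>UNIV. (if l = j then a l else if l = k then b l else 0))
     = (\<Sum>l\<in>UNIV. (if l = j then a l else 0) + (if l = k then b l else 0))"
    using assms by (intro sum.cong) auto
  also have "\<dots> = a j + b k" by (simp add: sum.distrib)
  finally show ?thesis .
qed

lemma sq_lift_nth[simp]: "sq_lift Y $ j $ i = Y $ i $ j * Y $ i $ j"
  by (simp add: sq_lift_def)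

lemma sq_lift_in: "Y \<in> sphere_product \<Longrightarrow> sq_lift Y \<in> col_stochastic"
  by (simp add: sphere_product_def col_stochastic_def norm1_iff)

lemma inner_mat: "inner (G::real^'m^'n) V = (\<Sum>i\<in>UNIV. \<Sum>j\<in>UNIV. G$j$i * V$j$i)"
proof -
  have "inner G V = (\<Sum>j\<in>UNIV. \<Sum>i\<in>UNIV. G$j$i * V$j$i)" by (simp add: inner_vec_def)
  also have "\<dots> = (\<Sum>i\<in>UNIV. \<Sum>j\<in>UNIV. G$j$i * V$j$i)" by (rule sum.swap)
  finally show ?thesis .
qed

lemma sqrt_diff_le: "0 \<le> a \<Longrightarrow> 0 \<le> b \<Longrightarrow> \<bar>sqrt a - sqrt b\<bar> \<le> sqrt \<bar>a - b\<bar>"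
proof -
  have *: "sqrt x - sqrt y \<le> sqrt \<bar>x - y\<bar>" if "0 \<le> y" "y \<le> x" for x y :: real
  proof -
    have "sqrt x = sqrt (y + (x - y))" by simp
    also have "\<dots> \<le> sqrt y + sqrt (x - y)" using that by (intro sqrt_add_le_add_sqrt) auto
    finally show ?thesis using that by simp
  qed
  assume "0 \<le> a" "0 \<le> b"
  then show ?thesis
    using *[of b a] *[of a b] by (cases "a \<le> b") (auto simp: abs_minus_commute)
qed

lemma norm_mat_le: "norm (x::real^'n^'m) \<le> (\<Sum>i\<in>UNIV. \<Sum>j\<in>UNIV. \<bar>x$i$j\<bar>)"
proof -
  have "norm x \<le> (\<Sum>i\<in>UNIV. norm (x$i))"
    unfolding norm_vec_def by (rule L2_set_le_sum) auto
  also have "\<dots> \<le> (\<Sum>i\<in>UNIV. \<Sum>j\<in>UNIV. \<bar>x$i$j\<bar>)"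
    by (intro sum_mono norm_le_l1_cart)
  finally show ?thesis .
qed

lemma entry_le_norm: "\<bar>(x::real^'n^'m)$i$j\<bar> \<le> norm x"
  by (rule order_trans[OF component_le_norm_cart Finite_Cartesian_Product.norm_nth_le])

lemma l2l:
  assumes Y: "(Y::real^'n^'m) \<in> sphere_product"
  shows "local_to_local sphere_product sq_lift col_stochastic Y"
  unfolding local_to_local_def
proof (intro allI impI)
  fix f :: "real^'m^'n \<Rightarrow> real"
  assume "local_min_on sphere_product (f \<circ> sq_lift) Y"
  then obtain e where e: "e > 0" "\<And>Z. Z \<in> sphere_product \<Longrightarrow> dist Z Y < e \<Longrightarrow> f (sq_lift Y) \<le> f (sq_lift Z)"
    unfolding local_min_on_def by auto
  define N where "N = real (CARD('m) * CARD('n))"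
  have N: "N > 0" unfolding N_def by simp
  define sg where "sg i j = (if Y$i$j < 0 then -1 else (1::real))" for i j
  have sgY: "Y$i$j = sg i j * sqrt (sq_lift Y $ j $ i)" for i j
    by (simp add: sg_def real_sqrt_mult_self)
  have sg2: "sg i j * sg i j = 1" for i j by (simp add: sg_def)
  define \<psi> where "\<psi> X = (\<chi> i j. sg i j * sqrt (X$j$i))" for X :: "real^'m^'n"
  have psiM: "\<psi> X \<in> sphere_product" and psiL: "sq_lift (\<psi> X) = X"
    if X: "X \<in> col_stochastic" for X
  proof -
    have nn: "X$j$i \<ge> 0" for i j using X by (simp add: col_stochastic_def)
    have "\<psi> X $ i $ j * \<psi> X $ i $ j = X $ j $ i" for i j
      using nn[of j i] sg2[of i j] by (simp add: \<psi>_def algebra_simps)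
    then show "sq_lift (\<psi> X) = X" by (simp add: vec_eq_iff)
    show "\<psi> X \<in> sphere_product"
      using X \<open>\<And>i j. \<psi> X $ i $ j * \<psi> X $ i $ j = X $ j $ i\<close>
      by (simp add: sphere_product_def norm1_iff col_stochastic_def)
  qed
  have psid: "dist (\<psi> X) Y \<le> N * sqrt (dist X (sq_lift Y))" if X: "X \<in> col_stochastic" for X
  proof -
    have nn: "X$j$i \<ge> 0" for i j using X by (simp add: col_stochastic_def)
    have "dist (\<psi> X) Y \<le> (\<Sum>i\<in>UNIV. \<Sum>j\<in>UNIV. \<bar>(\<psi> X - Y)$i$j\<bar>)"
      unfolding dist_norm by (rule norm_mat_le)
    also have "\<dots> \<le> (\<Sum>i\<in>(UNIV::'m set). \<Sum>j\<in>(UNIV::'n set). sqrt (dist X (sq_lift Y)))"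
    proof (intro sum_mono)
      fix i j
      have e1: "(\<psi> X)$i$j = sg i j * sqrt (X$j$i)" by (simp add: \<psi>_def)
      have "(\<psi> X - Y)$i$j = sg i j * (sqrt (X$j$i) - sqrt (sq_lift Y $ j $ i))"
        using e1 sgY[of i j] by (simp del: sq_lift_nth add: right_diff_distrib)
      then have "\<bar>(\<psi> X - Y)$i$j\<bar> = \<bar>sqrt (X$j$i) - sqrt (sq_lift Y $ j $ i)\<bar>"
        by (simp del: sq_lift_nth add: abs_mult sg_def)
      also have "\<dots> \<le> sqrt \<bar>X$j$i - sq_lift Y $ j $ i\<bar>"
        by (rule sqrt_diff_le) (auto simp: nn)
      also have "\<dots> \<le> sqrt (dist X (sq_lift Y))"
        using entry_le_norm[of "X - sq_lift Y" j i] by (simp add: dist_norm)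
      finally show "\<bar>(\<psi> X - Y)$i$j\<bar> \<le> sqrt (dist X (sq_lift Y))" .
    qed
    also have "\<dots> = N * sqrt (dist X (sq_lift Y))" by (simp add: N_def)
    finally show ?thesis .
  qed
  show "local_min_on col_stochastic f (sq_lift Y)"
    unfolding local_min_on_def
  proof (intro conjI exI[of _ "(e/N)^2"] ballI impI)
    show "sq_lift Y \<in> col_stochastic" using Y by (rule sq_lift_in)
    show "(e/N)^2 > 0" using e N by simp
    fix X assume X: "X \<in> col_stochastic" and d: "dist X (sq_lift Y) < (e/N)^2"
    have "sqrt (dist X (sq_lift Y)) < e/N"
      using d e N by (metis abs_of_pos divide_pos_pos real_sqrt_abs real_sqrt_less_iff)
    then have "N * sqrt (dist X (sq_lift Y)) < e" using N by (simp add: field_simps)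
    then have "dist (\<psi> X) Y < e" using psid[OF X] by linarith
    then have "f (sq_lift Y) \<le> f (sq_lift (\<psi> X))" using e(2) psiM[OF X] by blast
    then show "f (sq_lift Y) \<le> f X" using psiL[OF X] by simp
  qed
qed

lemma tc:
  assumes X: "(X::real^'m^'n) \<in> col_stochastic" and V: "V \<in> tangent_cone col_stochastic X"
  shows "(\<forall>i. (\<Sum>j\<in>UNIV. V$j$i) = 0) \<and> (\<forall>j i. X$j$i = 0 \<longrightarrow> V$j$i \<ge> 0)"
proof -
  obtain xs \<tau> where xs: "\<And>l. xs l \<in> col_stochastic" and tau: "\<And>l. \<tau> l > 0"
    and lim: "(\<lambda>l. (xs l - X) /\<^sub>R \<tau> l) \<longlonglongrightarrow> V"
    using V unfolding tangent_cone_def by blast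
  have limc: "(\<lambda>l. ((xs l - X) /\<^sub>R \<tau> l) $ j $ i) \<longlonglongrightarrow> V $ j $ i" for j i
    by (intro tendsto_vec_nth lim)
  have "(\<Sum>j\<in>UNIV. V$j$i) = 0" for i
  proof -
    have "(\<lambda>l. \<Sum>j\<in>UNIV. ((xs l - X) /\<^sub>R \<tau> l) $ j $ i) \<longlonglongrightarrow> (\<Sum>j\<in>UNIV. V$j$i)"
      by (intro tendsto_sum limc)
    moreover have "(\<Sum>j\<in>UNIV. ((xs l - X) /\<^sub>R \<tau> l) $ j $ i) = 0" for l
    proof -
      have "(\<Sum>j\<in>UNIV. ((xs l - X) /\<^sub>R \<tau> l) $ j $ i) = (\<Sum>j\<in>UNIV. (xs l $ j $ i - X $ j $ i) / \<tau> l)"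
        by (intro sum.cong refl) (simp add: divide_inverse mult.commute)
      also have "\<dots> = ((\<Sum>j\<in>UNIV. xs l $ j $ i) - (\<Sum>j\<in>UNIV. X $ j $ i)) / \<tau> l"
        by (simp only: sum_divide_distrib[symmetric] sum_subtractf)
      also have "\<dots> = 0" using xs[of l] X by (simp add: col_stochastic_def)
      finally show ?thesis .
    qed
    ultimately have "(\<lambda>l. 0::real) \<longlonglongrightarrow> (\<Sum>j\<in>UNIV. V$j$i)" by simp
    then show ?thesis by (simp add: LIMSEQ_const_iff)
  qed
  moreover have "V$j$i \<ge> 0" if "X$j$i = 0" for j i
  proof (rule tendsto_lowerbound[OF limc])
    show "\<forall>\<^sub>F l in sequentially. 0 \<le> ((xs l - X) /\<^sub>R \<tau> l) $ j $ i"
    proof (rule always_eventually, rule allI)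
      fix l
      have a: "0 \<le> xs l $ j $ i" using xs[of l] by (simp add: col_stochastic_def)
      have b: "0 \<le> inverse (\<tau> l)" using tau[of l] by simp
      show "0 \<le> ((xs l - X) /\<^sub>R \<tau> l) $ j $ i"
        using mult_nonneg_nonneg[OF b a] that by simp
    qed
  qed simp
  ultimately show ?thesis by blast
qed

lemma dual_ok:
  assumes X: "(X::real^'m^'n) \<in> col_stochastic"
    and lam: "\<And>i. \<exists>lam. (\<forall>j. X$j$i \<noteq> 0 \<longrightarrow> G$j$i = lam) \<and> (\<forall>j. X$j$i = 0 \<longrightarrow> G$j$i \<ge> lam)"
  shows "G \<in> dual_cone (tangent_cone col_stochastic X)"
  unfolding dual_cone_def
proof (intro CollectI ballI)
  fix V assume V: "V \<in> tangent_cone col_stochastic X"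
  note t = tc[OF X V]
  have "(\<Sum>j\<in>UNIV. G$j$i * V$j$i) \<ge> 0" for i
  proof -
    obtain lam where l: "\<And>j. X$j$i \<noteq> 0 \<Longrightarrow> G$j$i = lam" "\<And>j. X$j$i = 0 \<Longrightarrow> G$j$i \<ge> lam"
      using lam[of i] by blast
    have "(\<Sum>j\<in>UNIV. G$j$i * V$j$i) = (\<Sum>j\<in>UNIV. (G$j$i - lam) * V$j$i) + lam * (\<Sum>j\<in>UNIV. V$j$i)"
      by (simp add: algebra_simps sum.distrib sum_distrib_left sum_subtractf)
    also have "\<dots> = (\<Sum>j\<in>UNIV. (G$j$i - lam) * V$j$i)" using t by simp
    also have "\<dots> \<ge> 0"
    proof (intro sum_nonneg)
      fix j
      show "0 \<le> (G$j$i - lam) * V$j$i"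
        using l[of j] t by (cases "X$j$i = 0") auto
    qed
    finally show ?thesis .
  qed
  then show "0 \<le> inner G V" unfolding inner_mat by (rule sum_nonneg)
qed


lemma cos_shift: "cos (t + real (Suc k) * (pi/2)) = - sin (t + real k * (pi/2))"
  and sin_shift: "sin (t + real (Suc k) * (pi/2)) = cos (t + real k * (pi/2))"
proof -
  have e: "t + real (Suc k) * (pi/2) = (t + real k * (pi/2)) + pi/2" by (simp add: algebra_simps)
  show "cos (t + real (Suc k) * (pi/2)) = - sin (t + real k * (pi/2))"
    unfolding e by (simp add: cos_add)
  show "sin (t + real (Suc k) * (pi/2)) = cos (t + real k * (pi/2))"
    unfolding e by (simp add: sin_add)
qed

lemma smooth_trig: "smooth_curve (\<lambda>t. A + cos t *\<^sub>R P + sin t *\<^sub>R U)"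
proof -
  define D where "D k t = (if k = 0 then A else 0) + cos (t + real k * (pi/2)) *\<^sub>R P
     + sin (t + real k * (pi/2)) *\<^sub>R U" for k t
  have 1: "D 0 = (\<lambda>t. A + cos t *\<^sub>R P + sin t *\<^sub>R U)" by (simp add: D_def fun_eq_iff)
  have 2: "(D k has_vector_derivative D (Suc k) t) (at t)" for k t
  proof -
  have e1: "D k = (\<lambda>t. (if k = 0 then A else 0) + cos (t + real k * (pi/2)) *\<^sub>R P
     + sin (t + real k * (pi/2)) *\<^sub>R U)" by (rule ext) (simp only: D_def)
  have e2: "D (Suc k) t = (- sin (t + real k * (pi/2))) *\<^sub>R P + cos (t + real k * (pi/2)) *\<^sub>R U"
    unfolding D_def by (simp only: cos_shift sin_shift) simp
  have "((\<lambda>t. (if k = 0 then A else 0) + cos (t + real k * (pi/2)) *\<^sub>R P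
     + sin (t + real k * (pi/2)) *\<^sub>R U) has_vector_derivative
       (- sin (t + real k * (pi/2))) *\<^sub>R P + cos (t + real k * (pi/2)) *\<^sub>R U) (at t)"
    by (auto intro!: derivative_eq_intros)
  then show "(D k has_vector_derivative D (Suc k) t) (at t)"
    unfolding e1 e2 .
  qed
  show ?thesis unfolding smooth_curve_def using 1 2 by blast
qed

lemma chain_inner:
  assumes "(f has_derivative inner G) (at (\<Phi> 0))" "(\<Phi> has_vector_derivative \<Phi>') (at 0)"
  shows "((f \<circ> \<Phi>) has_real_derivative inner G \<Phi>') (at 0)"
proof -
  have "((f \<circ> \<Phi>) has_derivative (inner G \<circ> (\<lambda>h. h *\<^sub>R \<Phi>'))) (at 0)"
    using assms unfolding has_vector_derivative_def by (rule diff_chain_at[rotated])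
  moreover have "(inner G \<circ> (\<lambda>h. h *\<^sub>R \<Phi>')) = (*) (inner G \<Phi>')"
    by (simp add: fun_eq_iff)
  ultimately show ?thesis by (simp add: has_field_derivative_def)
qed

definition hprod :: "real^'n^'m \<Rightarrow> real^'n^'m \<Rightarrow> real^'m^'n" where
  "hprod Y Z = (\<chi> j i. Y$i$j * Z$i$j)"

lemma hprod_nth[simp]: "hprod Y Z $ j $ i = Y$i$j * Z$i$j" by (simp add: hprod_def)

definition colP :: "real^'n^'m \<Rightarrow> 'm \<Rightarrow> real^'n \<Rightarrow> real^'n^'m" where
  "colP Y i u = (\<chi> i'. if i' = i then u else 0)"

lemma colP_nth[simp]: "colP Y i u $ i' = (if i' = i then u else 0)" by (simp add: colP_def)

lemma curve_facts:
  fixes Y :: "real^'n^'m"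
  assumes Y: "Y \<in> sphere_product" and u: "norm u = 1" "inner (Y$i) u = 0"
  defines "P \<equiv> colP Y i (Y$i)" and "U \<equiv> colP Y i u"
  defines "C \<equiv> (\<lambda>t. (Y - P) + cos t *\<^sub>R P + sin t *\<^sub>R U)"
  shows "smooth_curve C" "\<And>t. C t \<in> sphere_product" "C 0 = Y"
    "\<And>t. sq_lift (C t) = sq_lift (Y - P) + (cos t)^2 *\<^sub>R sq_lift P + (sin t)^2 *\<^sub>R sq_lift U
        + (2 * cos t * sin t) *\<^sub>R hprod P U"
proof -
  show "smooth_curve C" unfolding C_def by (rule smooth_trig)
  show "C 0 = Y" by (simp add: C_def)
  fix t
  have Cn: "C t $ i' = (if i' = i then cos t *\<^sub>R Y$i + sin t *\<^sub>R u else Y$i')" for i'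
    by (simp add: C_def P_def U_def)
  have "norm (cos t *\<^sub>R Y$i + sin t *\<^sub>R u) = 1"
  proof -
    have ny: "inner (Y$i) (Y$i) = 1" using Y by (simp add: sphere_product_def norm_eq_sqrt_inner)
    have nu: "inner u u = 1" using u by (simp add: norm_eq_sqrt_inner)
    have "inner (cos t *\<^sub>R Y$i + sin t *\<^sub>R u) (cos t *\<^sub>R Y$i + sin t *\<^sub>R u) = (cos t)^2 + (sin t)^2"
      using ny nu u(2) by (simp add: inner_add_left inner_add_right inner_commute power2_eq_square)
    then show ?thesis by (simp add: norm_eq_sqrt_inner)
  qed
  then show "C t \<in> sphere_product" using Y by (simp add: sphere_product_def Cn)
  show "sq_lift (C t) = sq_lift (Y - P) + (cos t)^2 *\<^sub>R sq_lift P + (sin t)^2 *\<^sub>R sq_lift U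
        + (2 * cos t * sin t) *\<^sub>R hprod P U"
    by (simp add: vec_eq_iff Cn P_def U_def power2_eq_square algebra_simps)
qed

lemma colP_nth2[simp]: "colP Y i u $ i' $ j = (if i' = i then u$j else 0)" by (simp add: colP_def)

lemma inner_hprod_col:
  "inner G (hprod (colP Y i v) (colP Y i u)) = inner (\<chi> j. G$j$i * v$j) u"
proof -
  have "inner G (hprod (colP Y i v) (colP Y i u)) = (\<Sum>i'\<in>UNIV. \<Sum>j\<in>UNIV. G$j$i' * (if i' = i then v$j * u$j else 0))"
    unfolding inner_mat by (intro sum.cong refl) simp
  also have "\<dots> = (\<Sum>i'\<in>UNIV. if i' = i then (\<Sum>j\<in>UNIV. G$j$i' * (v$j * u$j)) else 0)"
    by (intro sum.cong refl) auto
  also have "\<dots> = (\<Sum>j\<in>UNIV. G$j$i * (v$j * u$j))" by simp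
  also have "\<dots> = inner (\<chi> j. G$j$i * v$j) u" by (simp add: inner_vec_def mult.assoc)
  finally show ?thesis .
qed

lemma deriv1:
  fixes Y :: "real^'n^'m"
  assumes Y: "Y \<in> sphere_product" and u: "norm u = 1" "inner (Y$i) u = 0"
    and fG: "(f has_derivative inner G) (at (sq_lift Y))"
    and cr: "crit1 sphere_product (f \<circ> sq_lift) Y"
  shows "inner (\<chi> j. G$j$i * Y$i$j) u = 0"
proof -
  define P where "P = colP Y i (Y$i)"
  define U where "U = colP Y i u"
  define C where "C = (\<lambda>t. (Y - P) + cos t *\<^sub>R P + sin t *\<^sub>R U)"
  note cf = curve_facts[OF Y u, folded P_def U_def, folded C_def]
  have Phi: "(\<lambda>t. sq_lift (C t)) = (\<lambda>t. sq_lift (Y - P) + (cos t)^2 *\<^sub>R sq_lift P + (sin t)^2 *\<^sub>R sq_lift U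
        + (2 * cos t * sin t) *\<^sub>R hprod P U)" by (rule ext) (unfold C_def, rule cf(4))
  have c1: "smooth_curve C" "\<And>t. C t \<in> sphere_product" "C 0 = Y"
    unfolding C_def using cf(1,2,3) by (auto simp: C_def)
  have "((\<lambda>t. sq_lift (Y - P) + (cos t)^2 *\<^sub>R sq_lift P + (sin t)^2 *\<^sub>R sq_lift U
        + (2 * cos t * sin t) *\<^sub>R hprod P U) has_vector_derivative (2 *\<^sub>R hprod P U)) (at 0)"
    by (auto intro!: derivative_eq_intros)
  then have dPhi: "((\<lambda>t. sq_lift (C t)) has_vector_derivative (2 *\<^sub>R hprod P U)) (at 0)"
    unfolding Phi .
  have fG': "(f has_derivative inner G) (at ((\<lambda>t. sq_lift (C t)) 0))" using fG c1(3) by simp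
  have "((f \<circ> (\<lambda>t. sq_lift (C t))) has_real_derivative inner G (2 *\<^sub>R hprod P U)) (at 0)"
    by (rule chain_inner[OF fG' dPhi])
  moreover have "(f \<circ> (\<lambda>t. sq_lift (C t))) = (f \<circ> sq_lift) \<circ> C" by (simp add: fun_eq_iff)
  ultimately have "deriv ((f \<circ> sq_lift) \<circ> C) 0 = inner G (2 *\<^sub>R hprod P U)"
    using DERIV_imp_deriv by metis
  moreover have "deriv ((f \<circ> sq_lift) \<circ> C) 0 = 0"
    using cr c1 unfolding crit1_def by blast
  ultimately have "inner G (hprod P U) = 0" by simp
  then show ?thesis unfolding P_def U_def inner_hprod_col .
qed

lemma grad_eq:
  fixes Y :: "real^'n^'m"
  assumes Y: "Y \<in> sphere_product"
    and fG: "(f has_derivative inner G) (at (sq_lift Y))"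
    and cr: "crit1 sphere_product (f \<circ> sq_lift) Y"
    and nz: "Y$i$j \<noteq> 0" "Y$i$k \<noteq> 0"
  shows "G$j$i = G$k$i"
proof (cases "j = k")
  case False
  define r where "r = sqrt (Y$i$j * Y$i$j + Y$i$k * Y$i$k)"
  have r2: "r * r = Y$i$j * Y$i$j + Y$i$k * Y$i$k" unfolding r_def
    by (simp add: add_nonneg_nonneg)
  have "Y$i$j * Y$i$j > 0" using nz(1) by (metis not_real_square_gt_zero)
  then have rpos: "r > 0" unfolding r_def by (simp add: add_pos_nonneg)
  define u where "u = (Y$i$k / r) *\<^sub>R axis j (1::real) + (- Y$i$j / r) *\<^sub>R axis k 1"
  have "inner u u = (Y$i$k * Y$i$k + Y$i$j * Y$i$j) / (r * r)"
    using False rpos by (simp add: u_def inner_diff_left inner_diff_right inner_axis_axis field_simps)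
  also have "\<dots> = 1" using r2 rpos nz by simp
  finally have nu: "norm u = 1" by (simp add: norm_eq_sqrt_inner)
  have iu: "inner (Y$i) u = 0"
    by (simp add: u_def inner_add_right inner_axis algebra_simps)
  have "inner (\<chi> j. G$j$i * Y$i$j) u = 0" by (rule deriv1[OF Y nu iu fG cr])
  then have "(G$j$i * Y$i$j * Y$i$k - G$k$i * Y$i$k * Y$i$j) / r = 0"
    by (simp add: u_def inner_add_right inner_axis diff_divide_distrib algebra_simps)
  then have "(G$j$i - G$k$i) * (Y$i$j * Y$i$k) = 0" using rpos by (simp add: algebra_simps)
  then show ?thesis using nz by simp
qed simp


lemma second:
  fixes f :: "'a::real_normed_vector \<Rightarrow> real"
  assumes Df: "\<And>x. (f has_derivative blinfun_apply (D x)) (at x)" and Dd: "\<And>x. D differentiable at x"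
  shows "deriv (deriv (\<lambda>t. f (X + (sin t)^2 *\<^sub>R W))) 0 = 2 * blinfun_apply (D X) W"
proof -
  define g where "g t = X + (sin t)^2 *\<^sub>R W" for t
  have gd: "(g has_vector_derivative (2 * sin t * cos t) *\<^sub>R W) (at t)" for t
    unfolding g_def by (auto intro!: derivative_eq_intros simp: algebra_simps)
  define p where "p t = blinfun_apply (D (g t)) W" for t
  have d1: "((\<lambda>t. f (g t)) has_real_derivative (2 * sin t * cos t) * p t) (at t)" for t
  proof -
    have "((f \<circ> g) has_derivative (blinfun_apply (D (g t)) \<circ> (\<lambda>h. h *\<^sub>R ((2 * sin t * cos t) *\<^sub>R W)))) (at t)"
      using gd[of t] unfolding has_vector_derivative_def by (rule diff_chain_at) (rule Df)
    moreover have "(blinfun_apply (D (g t)) \<circ> (\<lambda>h. h *\<^sub>R ((2 * sin t * cos t) *\<^sub>R W)))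
        = (*) ((2 * sin t * cos t) * p t)"
      by (simp add: fun_eq_iff p_def blinfun.scaleR_right)
    ultimately show ?thesis by (simp add: has_field_derivative_def o_def)
  qed
  have dd: "deriv (\<lambda>t. f (g t)) = (\<lambda>t. (2 * sin t * cos t) * p t)"
    by (rule ext) (rule DERIV_imp_deriv[OF d1])
  have "p differentiable at 0"
  proof -
    have "g differentiable at 0" using gd[of 0] unfolding has_vector_derivative_def
      by (rule differentiableI)
    then have "(D \<circ> g) differentiable at 0" using Dd by (rule differentiable_chain_at)
    then have "((\<lambda>L. blinfun_apply L W) \<circ> (D \<circ> g)) differentiable at 0"
      by (rule differentiable_chain_at)
        (intro bounded_linear_imp_differentiable bounded_linear_apply_blinfun)
    moreover have "((\<lambda>L. blinfun_apply L W) \<circ> (D \<circ> g)) = p" by (simp add: fun_eq_iff p_def)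
    ultimately show ?thesis by simp
  qed
  then have dp: "(p has_real_derivative deriv p 0) (at 0)"
    using DERIV_deriv_iff_real_differentiable by blast
  have da: "((\<lambda>t. 2 * sin t * cos t) has_real_derivative 2) (at 0)"
    by (auto intro!: derivative_eq_intros)
  have "((\<lambda>t. (2 * sin t * cos t) * p t) has_real_derivative 2 * p 0 + deriv p 0 * (2 * sin 0 * cos 0)) (at 0)"
    by (rule DERIV_mult[OF da dp])
  then have "deriv (\<lambda>t. (2 * sin t * cos t) * p t) 0 = 2 * p 0"
    by (simp add: DERIV_imp_deriv)
  then show ?thesis using dd by (simp add: g_def p_def)
qed


lemma sq_lift_hprod: "sq_lift Y = hprod Y Y" by (simp add: vec_eq_iff)

lemma deriv2:
  fixes Y :: "real^'n^'m" and f :: "real^'m^'n \<Rightarrow> real"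
  assumes Y: "Y \<in> sphere_product" and z: "Y$i$j0 = 0"
    and Df: "\<And>x. (f has_derivative blinfun_apply (D x)) (at x)" and Dd: "\<And>x. D differentiable at x"
    and cr: "crit2 sphere_product (f \<circ> sq_lift) Y"
  shows "blinfun_apply (D (sq_lift Y)) (sq_lift (colP Y i (axis j0 1)) - sq_lift (colP Y i (Y$i))) \<ge> 0"
proof -
  define u :: "real^'n" where "u = axis j0 1"
  have u: "norm u = 1" "inner (Y$i) u = 0" using z by (simp_all add: u_def norm_axis_1 inner_axis)
  define P where "P = colP Y i (Y$i)"
  define U where "U = colP Y i u"
  define C where "C = (\<lambda>t. (Y - P) + cos t *\<^sub>R P + sin t *\<^sub>R U)"
  define W where "W = sq_lift U - sq_lift P"
  note cf = curve_facts[OF Y u, folded P_def U_def, folded C_def]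
  have c1: "smooth_curve C" "\<And>t. C t \<in> sphere_product" "C 0 = Y"
    unfolding C_def using cf(1,2,3) by (auto simp: C_def)
  have h0: "hprod P U = 0"
    using z by (simp add: vec_eq_iff P_def U_def u_def axis_def)
  have sY: "sq_lift (Y - P) + sq_lift P = sq_lift Y"
    by (simp add: vec_eq_iff P_def)
  have Ct: "sq_lift (C t) = sq_lift Y + (sin t)^2 *\<^sub>R W" for t
  proof -
    have "sq_lift (C t) = sq_lift (Y - P) + (1 - (sin t)^2) *\<^sub>R sq_lift P + (sin t)^2 *\<^sub>R sq_lift U"
      unfolding C_def using cf(4)[of t] h0 by (simp add: cos_squared_eq)
    also have "\<dots> = (sq_lift (Y - P) + sq_lift P) + (sin t)^2 *\<^sub>R W"
      by (simp add: W_def algebra_simps)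
    finally show ?thesis using sY by simp
  qed
  have "(f \<circ> sq_lift) \<circ> C = (\<lambda>t. f (sq_lift Y + (sin t)^2 *\<^sub>R W))"
    by (simp add: fun_eq_iff Ct)
  moreover have "deriv (deriv ((f \<circ> sq_lift) \<circ> C)) 0 \<ge> 0"
    using cr c1 unfolding crit2_def by blast
  ultimately have "2 * blinfun_apply (D (sq_lift Y)) W \<ge> 0"
    using second[of f D "sq_lift Y" W, OF Df Dd] by simp
  then show ?thesis by (simp add: W_def P_def U_def u_def)
qed

lemma inner_W:
  "inner G (sq_lift (colP Y i (axis j0 1)) - sq_lift (colP Y i (Y$i)))
     = G$j0$i - (\<Sum>j\<in>UNIV. G$j$i * (Y$i$j * Y$i$j))"
proof -
  have "inner G (sq_lift (colP Y i (axis j0 1)) - sq_lift (colP Y i (Y$i)))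
      = inner (\<chi> j. G$j$i * axis j0 (1::real) $ j) (axis j0 1) - inner (\<chi> j. G$j$i * Y$i$j) (Y$i)"
    by (simp only: inner_diff_right sq_lift_hprod inner_hprod_col)
  also have "inner (\<chi> j. G$j$i * axis j0 (1::real) $ j) (axis j0 1) = G$j0$i"
    by (simp add: inner_axis)
  also have "inner (\<chi> j. G$j$i * Y$i$j) (Y$i) = (\<Sum>j\<in>UNIV. G$j$i * (Y$i$j * Y$i$j))"
    by (simp add: inner_vec_def mult.assoc)
  finally show ?thesis .
qed

lemma gradient_from:
  fixes L :: "'a::euclidean_space \<Rightarrow> real"
  assumes "(f has_derivative L) (at x)"
  shows "\<exists>G. L = inner G"
  using assms has_derivative_bounded_linear bounded_linear.linear riesz by blast

lemma exists_nz:
  fixes Y :: "real^'n^'m"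
  assumes "Y \<in> sphere_product" shows "\<exists>j. Y$i$j \<noteq> 0"
proof (rule ccontr)
  assume "\<not> ?thesis"
  then have "(\<Sum>j\<in>UNIV. Y$i$j * Y$i$j) = 0" by simp
  moreover have "(\<Sum>j\<in>UNIV. Y$i$j * Y$i$j) = 1" using assms by (simp add: sphere_product_def norm1_iff)
  ultimately show False by simp
qed

lemma t2o:
  fixes Y :: "real^'n^'m"
  assumes Y: "Y \<in> sphere_product"
  shows "two_to_one sphere_product sq_lift col_stochastic Y"
  unfolding two_to_one_def
proof (intro allI impI)
  fix f :: "real^'m^'n \<Rightarrow> real"
  assume "twice_differentiable f" and cr2: "crit2 sphere_product (f \<circ> sq_lift) Y"
  then obtain D where Df: "\<And>x. (f has_derivative blinfun_apply (D x)) (at x)"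
    and Dd: "\<And>x. D differentiable at x" unfolding twice_differentiable_def by blast
  obtain G where G: "blinfun_apply (D (sq_lift Y)) = inner G" using gradient_from[OF Df] by blast
  have fG: "(f has_derivative inner G) (at (sq_lift Y))" using Df[of "sq_lift Y"] G by simp
  have cr: "crit1 sphere_product (f \<circ> sq_lift) Y" using cr2 by (simp add: crit2_def)
  show "stationary f col_stochastic (sq_lift Y)"
    unfolding stationary_def
  proof (intro exI conjI)
    show "(f has_derivative inner G) (at (sq_lift Y))" by (rule fG)
    show "G \<in> dual_cone (tangent_cone col_stochastic (sq_lift Y))"
    proof (rule dual_ok[OF sq_lift_in[OF Y]])
      fix i
      obtain j1 where j1: "Y$i$j1 \<noteq> 0" using exists_nz[OF Y] by blast
      have supp: "G$j$i = G$j1$i" if "Y$i$j \<noteq> 0" for j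
        using grad_eq[OF Y fG cr that j1] .
      have "(\<Sum>j\<in>UNIV. G$j$i * (Y$i$j * Y$i$j)) = (\<Sum>j\<in>UNIV. G$j1$i * (Y$i$j * Y$i$j))"
        by (intro sum.cong refl) (metis supp mult_zero_left mult_zero_right)
      also have "\<dots> = G$j1$i" using Y by (simp add: sphere_product_def norm1_iff sum_distrib_left[symmetric])
      finally have sm: "(\<Sum>j\<in>UNIV. G$j$i * (Y$i$j * Y$i$j)) = G$j1$i" .
      have zero: "G$j$i \<ge> G$j1$i" if "Y$i$j = 0" for j
        using deriv2[OF Y that Df Dd cr2] G inner_W[of G Y i j] sm by simp
      show "\<exists>lam. (\<forall>j. sq_lift Y $ j $ i \<noteq> 0 \<longrightarrow> G $ j $ i = lam) \<and>
               (\<forall>j. sq_lift Y $ j $ i = 0 \<longrightarrow> lam \<le> G $ j $ i)"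
        using supp zero by (intro exI[of _ "G$j1$i"]) auto
    qed
  qed
qed

lemma o2o_fwd:
  fixes Y :: "real^'n^'m"
  assumes Y: "Y \<in> sphere_product" and nz: "\<forall>i j. Y$i$j \<noteq> 0"
  shows "one_to_one sphere_product sq_lift col_stochastic Y"
  unfolding one_to_one_def
proof (intro allI impI)
  fix f :: "real^'m^'n \<Rightarrow> real"
  assume "once_differentiable f" and cr: "crit1 sphere_product (f \<circ> sq_lift) Y"
  then obtain L where "(f has_derivative L) (at (sq_lift Y))"
    unfolding once_differentiable_def differentiable_def by blast
  moreover then obtain G where "L = inner G" using gradient_from by blast
  ultimately have fG: "(f has_derivative inner G) (at (sq_lift Y))" by simp
  show "stationary f col_stochastic (sq_lift Y)"
    unfolding stationary_def
  proof (intro exI conjI)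
    show "(f has_derivative inner G) (at (sq_lift Y))" by (rule fG)
    show "G \<in> dual_cone (tangent_cone col_stochastic (sq_lift Y))"
    proof (rule dual_ok[OF sq_lift_in[OF Y]])
      fix i
      obtain j1 where j1: "Y$i$j1 \<noteq> 0" using exists_nz[OF Y] by blast
      show "\<exists>lam. (\<forall>j. sq_lift Y $ j $ i \<noteq> 0 \<longrightarrow> G $ j $ i = lam) \<and>
               (\<forall>j. sq_lift Y $ j $ i = 0 \<longrightarrow> lam \<le> G $ j $ i)"
        using grad_eq[OF Y fG cr _ j1] nz by (intro exI[of _ "G$j1$i"]) auto
    qed
  qed
qed


lemma o2o_bwd:
  fixes Y :: "real^'n^'m"
  assumes Y: "Y \<in> sphere_product" and z: "Y$i$j = 0"
  shows "\<not> one_to_one sphere_product sq_lift col_stochastic Y"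
proof
  assume o: "one_to_one sphere_product sq_lift col_stochastic Y"
  define f :: "real^'m^'n \<Rightarrow> real" where "f X = - (X$j$i)" for X
  have bl: "bounded_linear f" unfolding f_def
    by (intro bounded_linear_minus bounded_linear_compose[OF bounded_linear_vec_nth bounded_linear_vec_nth])
  have od: "once_differentiable f"
    unfolding once_differentiable_def using bl bounded_linear_imp_differentiable by blast
  have cr: "crit1 sphere_product (f \<circ> sq_lift) Y"
    unfolding crit1_def
  proof (intro allI impI)
    fix c :: "real \<Rightarrow> real^'n^'m"
    assume "smooth_curve c \<and> (\<forall>t. c t \<in> sphere_product) \<and> c 0 = Y"
    then obtain Dc where c0: "Dc 0 = c" "\<And>k t. (Dc k has_vector_derivative Dc (Suc k) t) (at t)" "c 0 = Y"
      unfolding smooth_curve_def by blast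
    have c: "Dc 0 = c" "(c has_vector_derivative Dc 1 0) (at 0)" "c 0 = Y"
      using c0(1,3) c0(2)[of 0 0] by simp_all
    have q: "((\<lambda>t. c t $ i $ j) has_vector_derivative Dc 1 0 $ i $ j) (at 0)"
      using bounded_linear.has_vector_derivative[OF
          bounded_linear_compose[OF bounded_linear_vec_nth bounded_linear_vec_nth] c(2)] .
    then have q': "((\<lambda>t. c t $ i $ j) has_real_derivative Dc 1 0 $ i $ j) (at 0)"
      by (simp add: has_real_derivative_iff_has_vector_derivative)
    have "((\<lambda>t. - (c t $ i $ j * c t $ i $ j)) has_real_derivative
            - (Dc 1 0 $ i $ j * c 0 $ i $ j + Dc 1 0 $ i $ j * c 0 $ i $ j)) (at 0)"
      by (intro DERIV_minus DERIV_mult q')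
    moreover have "(f \<circ> sq_lift) \<circ> c = (\<lambda>t. - (c t $ i $ j * c t $ i $ j))"
      by (simp add: fun_eq_iff f_def)
    ultimately show "deriv ((f \<circ> sq_lift) \<circ> c) 0 = 0"
      using c(3) z by (simp add: DERIV_imp_deriv)
  qed
  have st: "stationary f col_stochastic (sq_lift Y)" using o od cr unfolding one_to_one_def by blast
  then obtain G where fG: "(f has_derivative inner G) (at (sq_lift Y))"
    and Gd: "G \<in> dual_cone (tangent_cone col_stochastic (sq_lift Y))"
    unfolding stationary_def by blast
  have "inner G = f" using has_derivative_unique[OF fG bounded_linear_imp_has_derivative[OF bl]] .
  define X where "X = sq_lift Y"
  have X: "X \<in> col_stochastic" unfolding X_def using Y by (rule sq_lift_in)
  have Xz: "X$j$i = 0" using z by (simp add: X_def)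
  obtain k where k: "X$k$i \<noteq> 0"
  proof (rule ccontr)
    assume "\<not> thesis"
    then have "\<forall>k. X$k$i = 0" using that by blast
    moreover have "(\<Sum>k\<in>UNIV. X$k$i) = 1" using X by (simp add: col_stochastic_def)
    ultimately show False by simp
  qed
  have kpos: "X$k$i > 0" using k X by (simp add: col_stochastic_def order_less_le)
  have jk: "j \<noteq> k" using k Xz by auto
  define V0 :: "real^'m^'n" where
    "V0 = (\<chi> a b. if b = i then (if a = j then 1 else if a = k then -1 else 0) else 0)"
  define \<tau> where "\<tau> l = X$k$i * inverse (real (Suc l))" for l
  have tpos: "\<tau> l > 0" for l using kpos by (simp add: \<tau>_def)
  have tle: "\<tau> l \<le> X$k$i" for l
  proof -
    have "inverse (real (Suc l)) \<le> 1" by (simp add: inverse_le_1_iff)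
    then show ?thesis unfolding \<tau>_def using kpos by (intro mult_left_le) auto
  qed
  have tlim: "\<tau> \<longlonglongrightarrow> 0" unfolding \<tau>_def
    by (rule tendsto_mult_right_zero[OF LIMSEQ_inverse_real_of_nat])
  have csum: "(\<Sum>a\<in>UNIV. V0 $ a $ b) = 0" for b
  proof (cases "b = i")
    case True
    then show ?thesis using sum_two[OF jk, of "\<lambda>_. 1::real" "\<lambda>_. -1"] by (simp add: V0_def)
  qed (simp add: V0_def)
  have xs: "X + \<tau> l *\<^sub>R V0 \<in> col_stochastic" for l
  proof -
    have "(X + \<tau> l *\<^sub>R V0) $ a $ b \<ge> 0" for a b
    proof -
      have "X$a$b \<ge> 0" using X by (simp add: col_stochastic_def)
      then show ?thesis using tle[of l] tpos[of l] jk
        by (auto simp: V0_def)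
    qed
    moreover have "(\<Sum>a\<in>UNIV. (X + \<tau> l *\<^sub>R V0) $ a $ b) = 1" for b
      using X csum[of b] by (simp add: col_stochastic_def sum.distrib sum_distrib_left[symmetric])
    ultimately show ?thesis by (simp add: col_stochastic_def)
  qed
  have "V0 \<in> tangent_cone col_stochastic X"
    unfolding tangent_cone_def
  proof (intro CollectI exI conjI allI)
    show "\<And>l. X + \<tau> l *\<^sub>R V0 \<in> col_stochastic" by (rule xs)
    show "\<And>l. \<tau> l > 0" by (rule tpos)
    show "\<tau> \<longlonglongrightarrow> 0" by (rule tlim)
    have "(\<lambda>l. (X + \<tau> l *\<^sub>R V0 - X) /\<^sub>R \<tau> l) = (\<lambda>l. V0)"
      using tpos by (simp add: fun_eq_iff less_imp_neq[symmetric])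
    then show "(\<lambda>l. (X + \<tau> l *\<^sub>R V0 - X) /\<^sub>R \<tau> l) \<longlonglongrightarrow> V0" by simp
  qed
  then have "inner G V0 \<ge> 0" using Gd unfolding dual_cone_def X_def by blast
  moreover have "inner G V0 = -1" using \<open>inner G = f\<close> by (simp add: f_def V0_def)
  ultimately show False by simp
qed

theorem proposition2p6:
  shows "(\<forall>Y \<in> (sphere_product :: (real^'n^'m) set).
            local_to_local sphere_product sq_lift col_stochastic Y)
       \<and> (\<forall>Y \<in> (sphere_product :: (real^'n^'m) set).
            one_to_one sphere_product sq_lift col_stochastic Y \<longleftrightarrow> (\<forall>i j. Y $ i $ j \<noteq> 0))
       \<and> (\<forall>Y \<in> (sphere_product :: (real^'n^'m) set).
            two_to_one sphere_product sq_lift col_stochastic Y)"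
  using l2l o2o_fwd o2o_bwd t2o by blast

end
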